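(* Let $\mathcal{A}\subseteq\mathbb{R}^3$ and let $\varphi_1,\ldots,\varphi_N\in L^2(\mathcal{A})$ be pairwise non-parallel with $\boldsymbol{\Psi}=\int_{\mathcal{A}}\boldsymbol{\varphi}^{\mathsf{H}}\boldsymbol{\varphi}\,\mathrm{d}\mathbf{r}$ positive definite, $\boldsymbol{\varphi}(\mathbf{r})=[\varphi_1(\mathbf{r}),\ldots,\varphi_N(\mathbf{r})]$, eigendecomposition $\boldsymbol{\Psi}=\mathbf{U}\,\mathrm{diag}(\lambda_1,\ldots,\lambda_N)\mathbf{U}^{\mathsf{H}}$, $\lambda_n>0$. For Hermitian $\mathbf{M}$ let $T_{\mathbf{M}}$ be the operator on $L^2(\mathcal{A})$ with kernel $\delta(\mathbf{r}-\mathbf{r}')-\boldsymbol{\varphi}(\mathbf{r})\mathbf{M}\boldsymbol{\varphi}^{\mathsf{H}}(\mathbf{r}')$. Let $C_\varphi=T_{-\mathbf{I}_N}$, $\overline{C}_\varphi=T_{(\mathbf{I}_N+\boldsymbol{\Psi})^{-1}}$, $\overline{B}_\varphi=T_{\overline{\mathbf{B}}_{\boldsymbol\Psi}}$ with $\overline{\mathbf{B}}_{\boldsymbol\Psi}=\mathbf{U}\,\mathrm{diag}\big(\tfrac{1+\sqrt{1+\lambda_n}}{\lambda_n\sqrt{1+\lambda_n}}\big)\mathbf{U}^{\mathsf{H}}$, and $B_\varphi=T_{\mathbf{B}_{\boldsymbol\Psi}}$ with $\mathbf{B}_{\boldsymbol\Psi}=\mathbf{U}\,\mathrm{diag}\big(\tfrac{1+\sqrt{1+\lambda_n}}{\lambda_n}\big)\mathbf{U}^{\mathsf{H}}$.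 Then $\overline{B}_\varphi\overline{B}_\varphi=\overline{C}_\varphi$ and $B_\varphi B_\varphi=C_\varphi$, i.e. $\int_{\mathcal{A}}\overline{B}_\varphi(\mathbf{r}_1,\mathbf{r})\overline{B}_\varphi(\mathbf{r},\mathbf{r}_2)\,\mathrm{d}\mathbf{r}=\overline{C}_\varphi(\mathbf{r}_1,\mathbf{r}_2)$ and $\int_{\mathcal{A}}B_\varphi(\mathbf{r}_1,\mathbf{r})B_\varphi(\mathbf{r},\mathbf{r}_2)\,\mathrm{d}\mathbf{r}=C_\varphi(\mathbf{r}_1,\mathbf{r}_2)$.
   Context: Kernels containing $\delta(\mathbf{r}-\mathbf{r}')$ denote the identity plus a finite-rank integral operator. *)

theory Defs
  imports "HOL-Analysis.Analysis"
begin

definition ctrans :: "complex^'n^'m \<Rightarrow> complex^'m^'n" where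
  "ctrans U = (\<chi> i j. cnj (U $ j $ i))"

definition rdiag :: "('n::finite \<Rightarrow> real) \<Rightarrow> complex^'n^'n" where
  "rdiag d = (\<chi> i j. if i = j then complex_of_real (d i) else 0)"

definition in_L2 :: "(real^3) set \<Rightarrow> (real^3 \<Rightarrow> complex) \<Rightarrow> bool" where
  "in_L2 A f \<longleftrightarrow> f \<in> borel_measurable (lebesgue_on A)
                 \<and> integrable (lebesgue_on A) (\<lambda>r. (cmod (f r))\<^sup>2)"

definition gram :: "(real^3) set \<Rightarrow> ('n::finite \<Rightarrow> real^3 \<Rightarrow> complex) \<Rightarrow> complex^'n^'n" where
  "gram A \<phi> = (\<chi> i j. integral\<^sup>L (lebesgue_on A) (\<lambda>r. cnj (\<phi> i r) * \<phi> j r))"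

text \<open>The operator T_M on L2(A) with kernel delta(r - r') - phi(r) M phi^H(r'),
  i.e. identity minus the finite-rank integral operator.\<close>
definition Top :: "(real^3) set \<Rightarrow> ('n::finite \<Rightarrow> real^3 \<Rightarrow> complex) \<Rightarrow> complex^'n^'n
                   \<Rightarrow> (real^3 \<Rightarrow> complex) \<Rightarrow> (real^3 \<Rightarrow> complex)" where
  "Top A \<phi> M f = (\<lambda>r. f r - (\<Sum>i\<in>UNIV. \<Sum>j\<in>UNIV. \<phi> i r * M $ i $ j *
        integral\<^sup>L (lebesgue_on A) (\<lambda>r'. cnj (\<phi> j r') * f r')))"

end

theory Submission
  imports Defs
begin

definition cv :: "(real^3) set \<Rightarrow> ('n::finite \<Rightarrow> real^3 \<Rightarrow> complex) \<Rightarrow> (real^3 \<Rightarrow> complex) \<Rightarrow> complex^'n" where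
  "cv A \<phi> f = (\<chi> j. integral\<^sup>L (lebesgue_on A) (\<lambda>r'. cnj (\<phi> j r') * f r'))"

lemma Top_alt: "Top A \<phi> M f r = f r - (\<Sum>i\<in>UNIV. \<phi> i r * (M *v cv A \<phi> f) $ i)"
  unfolding Top_def cv_def matrix_vector_mult_def
  by (simp add: sum_distrib_left mult.assoc)

lemma L2_int:
  assumes f: "in_L2 A f" and g: "in_L2 A g"
  shows "integrable (lebesgue_on A) (\<lambda>r. cnj (f r) * g r)"
proof (rule Bochner_Integration.integrable_bound)
  show "integrable (lebesgue_on A) (\<lambda>r. (cmod (f r))\<^sup>2 + (cmod (g r))\<^sup>2)"
    using f g unfolding in_L2_def by auto
  show "(\<lambda>r. cnj (f r) * g r) \<in> borel_measurable (lebesgue_on A)"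
  proof -
    have fm: "f \<in> borel_measurable (lebesgue_on A)" and gm: "g \<in> borel_measurable (lebesgue_on A)"
      using f g unfolding in_L2_def by auto
    have "(\<lambda>x. cnj (f x)) \<in> borel_measurable (lebesgue_on A)"
      by (rule measurable_compose[OF fm borel_measurable_continuous_onI]) (intro continuous_intros)
    then show ?thesis using gm by measurable
  qed
  show "AE x in lebesgue_on A. norm (cnj (f x) * g x) \<le> norm ((cmod (f x))\<^sup>2 + (cmod (g x))\<^sup>2)"
  proof (rule AE_I2)
    fix x
    have "cmod (f x) * cmod (g x) \<le> (cmod (f x))\<^sup>2 + (cmod (g x))\<^sup>2"
      by (smt (verit) norm_ge_zero power2_eq_square mult_mono zero_le_power2 sum_squares_bound)
    then show "norm (cnj (f x) * g x) \<le> norm ((cmod (f x))\<^sup>2 + (cmod (g x))\<^sup>2)"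
      by (simp add: norm_mult)
  qed
qed

lemma cv_Top:
  assumes L2: "\<And>i. in_L2 A (\<phi> i)" and f: "in_L2 A f"
  shows "cv A \<phi> (Top A \<phi> M f) = cv A \<phi> f - gram A \<phi> *v (M *v cv A \<phi> f)"
proof -
  let ?c = "M *v cv A \<phi> f"
  have "integral\<^sup>L (lebesgue_on A) (\<lambda>r. cnj (\<phi> k r) * Top A \<phi> M f r)
     = integral\<^sup>L (lebesgue_on A) (\<lambda>r. cnj (\<phi> k r) * f r) -
       (\<Sum>i\<in>UNIV. integral\<^sup>L (lebesgue_on A) (\<lambda>r. cnj (\<phi> k r) * \<phi> i r) * ?c $ i)" for k
  proof -
    have "integral\<^sup>L (lebesgue_on A) (\<lambda>r. cnj (\<phi> k r) * Top A \<phi> M f r)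
       = integral\<^sup>L (lebesgue_on A) (\<lambda>r. cnj (\<phi> k r) * f r - (\<Sum>i\<in>UNIV. cnj (\<phi> k r) * \<phi> i r * ?c $ i))"
      unfolding Top_alt by (simp add: right_diff_distrib sum_distrib_left mult.assoc)
    also have "\<dots> = integral\<^sup>L (lebesgue_on A) (\<lambda>r. cnj (\<phi> k r) * f r) -
       integral\<^sup>L (lebesgue_on A) (\<lambda>r. \<Sum>i\<in>UNIV. cnj (\<phi> k r) * \<phi> i r * ?c $ i)"
      by (rule Bochner_Integration.integral_diff) (auto intro!: L2_int L2 f)
    also have "integral\<^sup>L (lebesgue_on A) (\<lambda>r. \<Sum>i\<in>UNIV. cnj (\<phi> k r) * \<phi> i r * ?c $ i)
       = (\<Sum>i\<in>UNIV. integral\<^sup>L (lebesgue_on A) (\<lambda>r. cnj (\<phi> k r) * \<phi> i r * ?c $ i))"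
      by (rule Bochner_Integration.integral_sum) (auto intro!: L2_int L2 f)
    also have "\<dots> = (\<Sum>i\<in>UNIV. integral\<^sup>L (lebesgue_on A) (\<lambda>r. cnj (\<phi> k r) * \<phi> i r) * ?c $ i)"
      by simp
    finally show ?thesis .
  qed
  then show ?thesis
    unfolding cv_def gram_def
    by (simp add: vec_eq_iff matrix_vector_mult_def)
qed

lemma Top_Top:
  assumes L2: "\<And>i. in_L2 A (\<phi> i)" and f: "in_L2 A f"
  shows "Top A \<phi> M (Top A \<phi> M f) r = Top A \<phi> (M + M - M ** gram A \<phi> ** M) f r"
proof -
  let ?c = "cv A \<phi> f"
  have eq: "(M + M - M ** gram A \<phi> ** M) *v ?c = M *v ?c + M *v (?c - gram A \<phi> *v (M *v ?c))"
    by (simp only: matrix_vector_mult_add_rdistrib matrix_vector_mult_diff_rdistrib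
        matrix_vector_mult_diff_distrib matrix_vector_mul_assoc) (simp add: matrix_mul_assoc)
  show ?thesis
    unfolding Top_alt[of A \<phi> M "Top A \<phi> M f"] cv_Top[OF L2 f] Top_alt[of A \<phi> _ f] eq
    by (simp add: ring_distribs sum.distrib sum_subtractf)
qed


lemma rdiag_mult: "rdiag a ** rdiag b = rdiag (\<lambda>n. a n * b n)"
proof -
  have e: "(\<Sum>k\<in>UNIV. (if i = k then complex_of_real (a i) else 0) * (if k = j then complex_of_real (b k) else 0))
     = (if i = j then complex_of_real (a i * b i) else 0)" for i j
  proof -
    have "(\<Sum>k\<in>UNIV. (if i = k then complex_of_real (a i) else 0) * (if k = j then complex_of_real (b k) else 0))
       = (\<Sum>k\<in>UNIV. if k = i then complex_of_real (a i) * (if k = j then complex_of_real (b k) else 0) else 0)"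
      by (rule sum.cong) auto
    also have "\<dots> = complex_of_real (a i) * (if i = j then complex_of_real (b i) else 0)"
      by (subst sum.delta) (simp_all only: UNIV_I if_True finite)
    finally show ?thesis by auto
  qed
  show ?thesis
    unfolding rdiag_def matrix_matrix_mult_def
    by (simp only: vec_lambda_beta e)
qed

lemma mat_sub_ldistrib: "(A::complex^'n^'m) ** (B - C) = A ** B - A ** C"
  by (simp add: vec_eq_iff matrix_matrix_mult_def sum_subtractf right_diff_distrib)
lemma mat_sub_rdistrib: "((B::complex^'n^'m) - C) ** A = B ** A - C ** A"
  by (simp add: vec_eq_iff matrix_matrix_mult_def sum_subtractf left_diff_distrib)
lemma mat_add_rdistrib: "((B::complex^'n^'m) + C) ** A = B ** A + C ** A"
  by (simp add: vec_eq_iff matrix_matrix_mult_def sum.distrib distrib_right)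

lemma rdiag_add: "rdiag a + rdiag b = rdiag (\<lambda>n. a n + b n)"
  unfolding rdiag_def by (simp add: vec_eq_iff)
lemma rdiag_diff: "rdiag a - rdiag b = rdiag (\<lambda>n. a n - b n)"
  unfolding rdiag_def by (simp add: vec_eq_iff)
lemma rdiag_one: "rdiag (\<lambda>_. 1) = mat 1"
  unfolding rdiag_def mat_def by (simp add: vec_eq_iff)

lemma D_mult:
  assumes "ctrans U ** U = mat 1"
  shows "(U ** rdiag a ** ctrans U) ** (U ** rdiag b ** ctrans U) = U ** rdiag (\<lambda>n. a n * b n) ** ctrans U"
proof -
  have "(U ** rdiag a ** ctrans U) ** (U ** rdiag b ** ctrans U)
      = U ** rdiag a ** (ctrans U ** U) ** rdiag b ** ctrans U"
    by (simp add: matrix_mul_assoc)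
  also have "\<dots> = U ** (rdiag a ** rdiag b) ** ctrans U" using assms by (simp add: matrix_mul_assoc)
  finally show ?thesis by (simp add: rdiag_mult)
qed

lemma D_add: "U ** rdiag a ** V + U ** rdiag b ** V = U ** rdiag (\<lambda>n. a n + b n) ** V"
  by (simp only: matrix_add_ldistrib[symmetric] mat_add_rdistrib[symmetric] rdiag_add)
lemma D_diff: "U ** rdiag a ** V - U ** rdiag b ** V = U ** rdiag (\<lambda>n. a n - b n) ** V"
  by (simp only: mat_sub_ldistrib[symmetric] mat_sub_rdistrib[symmetric] rdiag_diff)

lemma D_sq:
  assumes "ctrans U ** U = mat 1"
  shows "let M = U ** rdiag m ** ctrans U in
    M + M - M ** (U ** rdiag lam ** ctrans U) ** M = U ** rdiag (\<lambda>n. 2 * m n - m n * lam n * m n) ** ctrans U"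
  using assms by (simp only: Let_def D_mult D_add D_diff) (simp add: algebra_simps)

lemma inv_unique:
  fixes A X :: "complex^'n^'n"
  assumes "A ** X = mat 1" "X ** A = mat 1"
  shows "matrix_inv A = X"
proof -
  let ?Y = "matrix_inv A"
  have "A ** ?Y = mat 1 \<and> ?Y ** A = mat 1"
    unfolding matrix_inv_def by (rule someI[of _ X]) (use assms in auto)
  then have "?Y = ?Y ** (A ** X)" using assms by simp
  also have "\<dots> = X" using \<open>A ** ?Y = mat 1 \<and> ?Y ** A = mat 1\<close> by (simp add: matrix_mul_assoc)
  finally show ?thesis .
qed


lemma arith_core1:
  fixes d s :: real assumes e: "s = d + 1" and nz: "d \<noteq> 0" "s \<noteq> 0"
  shows "2 * (1 / (d * s)) - (1 / (d * s)) * (d * (s + 1)) * (1 / (d * s)) = 1 / (s * s)"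
proof -
  have a: "(1 / (d * s)) * (d * (s + 1)) * (1 / (d * s)) = (s + 1) / (d * s * s)"
    using nz by (simp add: field_simps)
  have b: "2 * (1 / (d * s)) = (2 * s) / (d * s * s)"
    using nz by (simp add: field_simps)
  have "2 * (1 / (d * s)) - (1 / (d * s)) * (d * (s + 1)) * (1 / (d * s)) = (2 * s - (s + 1)) / (d * s * s)"
    unfolding a b by (rule diff_divide_distrib[symmetric])
  also have "2 * s - (s + 1) = d" using e by simp
  also have "d / (d * s * s) = 1 / (s * s)" using nz by (simp add: field_simps)
  finally show ?thesis .
qed

lemma arith_core2:
  fixes d s :: real assumes e: "s = d + 1" and nz: "d \<noteq> 0"
  shows "2 * (1 / d) - (1 / d) * (d * (s + 1)) * (1 / d) = -1"
proof -
  have a: "(1 / d) * (d * (s + 1)) * (1 / d) = (s + 1) / d"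
    using nz by (simp add: field_simps)
  have b: "2 * (1 / d) = 2 / d" by simp
  have "2 * (1 / d) - (1 / d) * (d * (s + 1)) * (1 / d) = (2 - (s + 1)) / d"
    unfolding a b by (rule diff_divide_distrib[symmetric])
  also have "2 - (s + 1) = - d" using e by simp
  also have "- d / d = -1" using nz by simp
  finally show ?thesis .
qed

lemma arith1:
  fixes l :: real assumes "l > 0"
  shows "2 * ((1 + sqrt (1 + l)) / (l * sqrt (1 + l))) - ((1 + sqrt (1 + l)) / (l * sqrt (1 + l))) * l * ((1 + sqrt (1 + l)) / (l * sqrt (1 + l))) = 1 / (1 + l)"
proof -
  define s where "s = sqrt (1 + l)"
  define d where "d = s - 1"
  have s1: "s > 1" using assms unfolding s_def by simp
  have l: "l = d * (s + 1)" using assms unfolding s_def d_def by (simp add: algebra_simps)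
  have ne: "d \<noteq> 0" "s + 1 \<noteq> 0" "s \<noteq> 0" "s = d + 1" using s1 unfolding d_def by auto
  have m: "(1 + s) / (l * s) = 1 / (d * s)" 
  proof -
    have "d * (s + 1) * s \<noteq> 0" "d * (s + 1) \<noteq> 0" "d * s \<noteq> 0" using ne(1-3) by auto
    then show ?thesis unfolding l using ne(1-3) by (simp add: field_simps)
  qed
  have ll: "1 + l = s * s" unfolding s_def using assms by (simp flip: power2_eq_square)
  have A: "2 * ((1 + s) / (l * s)) - ((1 + s) / (l * s)) * l * ((1 + s) / (l * s)) = 1 / (s * s)"
    unfolding m by (subst l) (rule arith_core1[OF ne(4) ne(1) ne(3)])
  have B: "1 / (1 + l) = 1 / (s * s)" using ll by simp
  show ?thesis unfolding s_def[symmetric] B by (rule A)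
qed

lemma arith2:
  fixes l :: real assumes "l > 0"
  shows "2 * ((1 + sqrt (1 + l)) / l) - ((1 + sqrt (1 + l)) / l) * l * ((1 + sqrt (1 + l)) / l) = -1"
proof -
  define s where "s = sqrt (1 + l)"
  define d where "d = s - 1"
  have s1: "s > 1" using assms unfolding s_def by simp
  have l: "l = d * (s + 1)" using assms unfolding s_def d_def by (simp add: algebra_simps)
  have ne: "d \<noteq> 0" "s + 1 \<noteq> 0" "s \<noteq> 0" "s = d + 1" using s1 unfolding d_def by auto
  have m: "(1 + s) / l = 1 / d" 
  proof -
    have "d * (s + 1) * s \<noteq> 0" "d * (s + 1) \<noteq> 0" "d * s \<noteq> 0" using ne(1-3) by auto
    then show ?thesis unfolding l using ne(1-3) by (simp add: field_simps)
  qed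
  show ?thesis unfolding s_def[symmetric] m using arith_core2[OF ne(4) ne(1)] l by simp
qed

theorem corollary1:
  fixes A :: "(real^3) set"
    and \<phi> :: "'n::finite \<Rightarrow> real^3 \<Rightarrow> complex"
    and U :: "complex^'n^'n"
    and lam :: "'n \<Rightarrow> real"
  assumes A_meas: "A \<in> sets lebesgue"
    and L2: "\<And>i. in_L2 A (\<phi> i)"
    and nonpar: "\<And>i j. i \<noteq> j \<Longrightarrow>
          \<not> (\<exists>a b. (a, b) \<noteq> (0::complex, 0::complex) \<and>
               (AE r in lebesgue_on A. a * \<phi> i r + b * \<phi> j r = 0))"
    and posdef: "\<And>x::complex^'n. x \<noteq> 0 \<Longrightarrow>
          0 < Re (\<Sum>i\<in>UNIV. cnj (x $ i) * (gram A \<phi> *v x) $ i)"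
    and unitary: "U ** ctrans U = mat 1" "ctrans U ** U = mat 1"
    and eig: "gram A \<phi> = U ** rdiag lam ** ctrans U"
    and lpos: "\<And>n. lam n > 0"
  defines "Bbar \<equiv> U ** rdiag (\<lambda>n. (1 + sqrt (1 + lam n)) / (lam n * sqrt (1 + lam n))) ** ctrans U"
    and "B \<equiv> U ** rdiag (\<lambda>n. (1 + sqrt (1 + lam n)) / lam n) ** ctrans U"
    and "Cbar \<equiv> matrix_inv (mat 1 + gram A \<phi>)"
    and "C \<equiv> - (mat 1 :: complex^'n^'n)"
  shows "\<forall>f. in_L2 A f \<longrightarrow>
            (\<forall>r\<in>A. Top A \<phi> Bbar (Top A \<phi> Bbar f) r = Top A \<phi> Cbar f r)
          \<and> (\<forall>r\<in>A. Top A \<phi> B (Top A \<phi> B f) r = Top A \<phi> C f r)"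
  proof (intro allI impI)
  fix f assume f: "in_L2 A f"
  let ?G = "gram A \<phi>"
  let ?V = "ctrans U"
  have one: "mat 1 = U ** rdiag (\<lambda>_. 1) ** ?V"
    using unitary(1) by (simp add: rdiag_one)
  have Cb: "Cbar = U ** rdiag (\<lambda>n. 1 / (1 + lam n)) ** ?V"
    unfolding Cbar_def
  proof (rule inv_unique)
    have "mat 1 + ?G = U ** rdiag (\<lambda>n. 1 + lam n) ** ?V"
      unfolding eig by (subst one) (rule D_add)
    moreover have "rdiag (\<lambda>n. (1 + lam n) * (1 / (1 + lam n))) = rdiag (\<lambda>_. 1)"
      "rdiag (\<lambda>n. (1 / (1 + lam n)) * (1 + lam n)) = rdiag (\<lambda>_. 1)"
      using lpos by (auto intro!: arg_cong[where f=rdiag] simp: fun_eq_iff add_pos_pos)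
         (metis add_pos_pos less_numeral_extra(1) less_numeral_extra(3))+
    ultimately show "(mat 1 + ?G) ** (U ** rdiag (\<lambda>n. 1 / (1 + lam n)) ** ?V) = mat 1"
      "U ** rdiag (\<lambda>n. 1 / (1 + lam n)) ** ?V ** (mat 1 + ?G) = mat 1"
      by (simp_all only: D_mult[OF unitary(2)] one[symmetric])
  qed
  have Bb: "Bbar + Bbar - Bbar ** ?G ** Bbar = Cbar"
  proof -
    have "Bbar + Bbar - Bbar ** ?G ** Bbar = U ** rdiag (\<lambda>n.
      2 * ((1 + sqrt (1 + lam n)) / (lam n * sqrt (1 + lam n))) - ((1 + sqrt (1 + lam n)) / (lam n * sqrt (1 + lam n))) * lam n * ((1 + sqrt (1 + lam n)) / (lam n * sqrt (1 + lam n)))) ** ?V"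
      unfolding Bbar_def eig using D_sq[OF unitary(2), of "\<lambda>n. (1 + sqrt (1 + lam n)) / (lam n * sqrt (1 + lam n))" lam]
      by (simp only: Let_def)
    also have "\<dots> = Cbar" unfolding Cb using lpos by (simp only: arith1)
    finally show ?thesis .
  qed
  have BB: "B + B - B ** ?G ** B = C"
  proof -
    have "B + B - B ** ?G ** B = U ** rdiag (\<lambda>n.
      2 * ((1 + sqrt (1 + lam n)) / lam n) - ((1 + sqrt (1 + lam n)) / lam n) * lam n * ((1 + sqrt (1 + lam n)) / lam n)) ** ?V"
      unfolding B_def eig using D_sq[OF unitary(2), of "\<lambda>n. (1 + sqrt (1 + lam n)) / lam n" lam]
      by (simp only: Let_def)
    also have "\<dots> = U ** rdiag (\<lambda>_. -1) ** ?V"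
      by (simp only: arith2[OF lpos])
    also have "\<dots> = U ** rdiag (\<lambda>_. 0) ** ?V - U ** rdiag (\<lambda>_. 1) ** ?V"
      by (simp only: D_diff) simp
    also have "rdiag (\<lambda>_. 0) = (0::complex^'n^'n)"
      by (simp add: rdiag_def vec_eq_iff)
    finally show ?thesis unfolding C_def one[symmetric] by simp
  qed
  show "(\<forall>r\<in>A. Top A \<phi> Bbar (Top A \<phi> Bbar f) r = Top A \<phi> Cbar f r)
          \<and> (\<forall>r\<in>A. Top A \<phi> B (Top A \<phi> B f) r = Top A \<phi> C f r)"
  proof (intro conjI ballI)
    fix r
    show "Top A \<phi> Bbar (Top A \<phi> Bbar f) r = Top A \<phi> Cbar f r"
      using Top_Top[of A \<phi> f Bbar r, OF L2 f] unfolding Bb .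
    show "Top A \<phi> B (Top A \<phi> B f) r = Top A \<phi> C f r"
      using Top_Top[of A \<phi> f B r, OF L2 f] unfolding BB .
  qed
qed

end
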